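(* Let $\mathcal P$ and $\mathcal Q$ be binary quadratic operads over a field $\Bbbk$ with finite-dimensional spaces of generating operations, and suppose both are Dong operads. Then their Manin black product $\mathcal P\bullet\mathcal Q$ also satisfies the Dong Property.
   Context: A binary quadratic operad $\mathcal P(V,R)$ is generated by an $S_2$-module $V$ of binary operations subject to quadratic relations $R\subseteq\mathcal F_V(3)$. For $\mathcal P=\mathcal P(V,R)$, $\mathcal Q=\mathcal P(W,S)$, the Manin black product $\mathcal P\bullet\mathcal Q$ (Ginzburg–Kapranov) is the binary quadratic operad generated by $\Bbbk_-\otimes V\otimes W$ ($\Bbbk_-$ the sign representation of $S_2$) with relations the image of $\Bbbk_-\otimes R\otimes S$ under the natural projection $\Bbbk_-\otimes\mathcal F_V(3)\otimes\mathcal F_W(3)\to\mathcal F_{\Bbbk_-\otimes V\otimes W}(3)$. Formal distributions and the Dong Property: for an algebra $A$ with a family of bilinear operations closed under the $S_2$-action, a formal distribution over $A$ is $a(z)=\sum_{s\in\mathbb Z}a(s)z^{-s-1}$, $a(s)\in A$. Distributions $a,b$ are local if for every operation $*$ there is $N\ge0$ with $(w-z)^N a(w)*b(z)=0$ in $A[[z^{\pm1},w^{\pm1}]]$. For $n\in\mathbb Z_+$ the $n$-product is $(a\,{*}_{(n)}\,b)(w)=\mathrm{Res}_{\xi=0}(\xi-w)^n a(\xi)*b(w)$. An operad is a Dong operad (satisfies the Dong Property) if for every algebra $A$ over it and every three pairwise local distributions $a,b,c$ over $A$, the distributions $(a\,{*}_{(n)}\,b)$ and $c$ are local for all $n\in\mathbb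 Z_+$ and all operations $*$. *)

theory Defs
  imports "HOL-Computational_Algebra.Polynomial" "HOL-Combinatorics.Permutations"
begin

text \<open>V has basis indexed by the finite set gens. The S_2-action on V is the
  involution tau with tau e_i = sum_k swp k i e_k.
  F_V(3) is identified with functions r s i1 i2 (s < 3, i1,i2 in gens):
  the basis element of shape s is the tree mu_{i2}(mu_{i1}(x_s, x_{s+1}), x_{s+2})
  (indices mod 3); these 3 * dim(V)^2 trees form a basis of F_V(3).\<close>

record ('k,'i) bq_operad =
  gens :: "'i set"
  swp  :: "'i \<Rightarrow> 'i \<Rightarrow> 'k"
  rels :: "(nat \<Rightarrow> 'i \<Rightarrow> 'i \<Rightarrow> 'k) set"

definition free3 :: "'i set \<Rightarrow> (nat \<Rightarrow> 'i \<Rightarrow> 'i \<Rightarrow> 'k::zero) set" where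
  "free3 I = {r. \<forall>s i1 i2. (3 \<le> s \<or> i1 \<notin> I \<or> i2 \<notin> I) \<longrightarrow> r s i1 i2 = 0}"

text \<open>The S_3-action on F_V(3): sigma relabels the leaves x_p to x_(sigma p) and
  the result is rewritten in the basis using the S_2-action on the inner vertex.\<close>
definition act3 :: "('k::field,'i) bq_operad \<Rightarrow> (nat \<Rightarrow> nat) \<Rightarrow>
    (nat \<Rightarrow> 'i \<Rightarrow> 'i \<Rightarrow> 'k) \<Rightarrow> (nat \<Rightarrow> 'i \<Rightarrow> 'i \<Rightarrow> 'k)" where
  "act3 P \<sigma> r = (\<lambda>t k1 k2.
     if t < 3 \<and> k1 \<in> gens P \<and> k2 \<in> gens P then
       (\<Sum>s<3. if (\<sigma> ((s + 2) mod 3) + 1) mod 3 = t then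
                 (if \<sigma> ((s + 1) mod 3) = (\<sigma> s + 1) mod 3 then r s k1 k2
                  else (\<Sum>i\<in>gens P. swp P k1 i * r s i k2))
               else 0)
     else 0)"

definition is_bq_operad :: "('k::field,'i) bq_operad \<Rightarrow> bool" where
  "is_bq_operad P \<longleftrightarrow>
     finite (gens P) \<and>
     (\<forall>i\<in>gens P. \<forall>j\<in>gens P.
        (\<Sum>k\<in>gens P. swp P i k * swp P k j) = (if i = j then 1 else 0)) \<and>
     rels P \<subseteq> free3 (gens P) \<and>
     (\<lambda>_ _ _. 0) \<in> rels P \<and>
     (\<forall>r\<in>rels P. \<forall>r'\<in>rels P. (\<lambda>s i1 i2. r s i1 i2 + r' s i1 i2) \<in> rels P) \<and>
     (\<forall>r\<in>rels P. \<forall>c. (\<lambda>s i1 i2. c * r s i1 i2) \<in> rels P) \<and>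
     (\<forall>\<sigma>. \<sigma> permutes {0, 1, 2} \<longrightarrow> (\<forall>r\<in>rels P. act3 P \<sigma> r \<in> rels P))"

definition is_algebra :: "('k::field,'i) bq_operad \<Rightarrow> ('k \<Rightarrow> 'a::ab_group_add \<Rightarrow> 'a)
     \<Rightarrow> ('i \<Rightarrow> 'a \<Rightarrow> 'a \<Rightarrow> 'a) \<Rightarrow> bool" where
  "is_algebra P sc m \<longleftrightarrow> vector_space sc \<and>
     (\<forall>i\<in>gens P. \<forall>x y z c.
        m i (x + y) z = m i x z + m i y z \<and> m i x (y + z) = m i x y + m i x z \<and>
        m i (sc c x) y = sc c (m i x y) \<and> m i x (sc c y) = sc c (m i x y)) \<and>
     (\<forall>i\<in>gens P. \<forall>x y. m i y x = (\<Sum>k\<in>gens P. sc (swp P k i) (m k x y))) \<and>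
     (\<forall>r\<in>rels P. \<forall>x :: nat \<Rightarrow> 'a.
        (\<Sum>s<3. \<Sum>i1\<in>gens P. \<Sum>i2\<in>gens P.
           sc (r s i1 i2) (m i2 (m i1 (x s) (x ((s + 1) mod 3))) (x ((s + 2) mod 3)))) = 0)"

text \<open>The operation corresponding to the element v = sum_i c i e_i of V.\<close>
definition opr :: "('k::field,'i) bq_operad \<Rightarrow> ('k \<Rightarrow> 'a::ab_group_add \<Rightarrow> 'a)
     \<Rightarrow> ('i \<Rightarrow> 'a \<Rightarrow> 'a \<Rightarrow> 'a) \<Rightarrow> ('i \<Rightarrow> 'k) \<Rightarrow> 'a \<Rightarrow> 'a \<Rightarrow> 'a" where
  "opr P sc m c x y = (\<Sum>i\<in>gens P. sc (c i) (m i x y))"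

text \<open>Formal distributions a(z) = sum_s a(s) z^(-s-1) are represented by a :: int => 'a.
  Locality: the coefficient of w^(-s-1) z^(-t-1) in (w-z)^N a(w)*b(z) vanishes.\<close>
definition local_dist :: "('k::field,'i) bq_operad \<Rightarrow> ('k \<Rightarrow> 'a::ab_group_add \<Rightarrow> 'a)
     \<Rightarrow> ('i \<Rightarrow> 'a \<Rightarrow> 'a \<Rightarrow> 'a) \<Rightarrow> (int \<Rightarrow> 'a) \<Rightarrow> (int \<Rightarrow> 'a) \<Rightarrow> bool" where
  "local_dist P sc m a b \<longleftrightarrow>
     (\<forall>c. \<exists>N::nat. \<forall>s t::int.
        (\<Sum>k\<le>N. sc ((-1) ^ k * of_nat (N choose k))
                    (opr P sc m c (a (s + int N - int k)) (b (t + int k)))) = 0)"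

text \<open>n-product: (a *_(n) b)(w) = Res_xi (xi - w)^n a(xi) * b(w); coefficient at index t.\<close>
definition nprod :: "('k::field,'i) bq_operad \<Rightarrow> ('k \<Rightarrow> 'a::ab_group_add \<Rightarrow> 'a)
     \<Rightarrow> ('i \<Rightarrow> 'a \<Rightarrow> 'a \<Rightarrow> 'a) \<Rightarrow> ('i \<Rightarrow> 'k) \<Rightarrow> nat \<Rightarrow> (int \<Rightarrow> 'a) \<Rightarrow> (int \<Rightarrow> 'a)
     \<Rightarrow> (int \<Rightarrow> 'a)" where
  "nprod P sc m c n a b = (\<lambda>t.
     (\<Sum>k\<le>n. sc ((-1) ^ k * of_nat (n choose k))
                 (opr P sc m c (a (int n - int k)) (b (t + int k)))))"

definition dong_alg :: "('k::field,'i) bq_operad \<Rightarrow> ('k \<Rightarrow> 'a::ab_group_add \<Rightarrow> 'a)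
     \<Rightarrow> ('i \<Rightarrow> 'a \<Rightarrow> 'a \<Rightarrow> 'a) \<Rightarrow> bool" where
  "dong_alg P sc m \<longleftrightarrow>
     (\<forall>a b d. local_dist P sc m a b \<and> local_dist P sc m b d \<and> local_dist P sc m a d \<longrightarrow>
        (\<forall>c n. local_dist P sc m (nprod P sc m c n a b) d))"

text \<open>Dong property for all algebras whose underlying space is (a vector space structure on) the type 'a.\<close>
definition dong :: "('k::field,'i) bq_operad \<Rightarrow> 'a::ab_group_add itself \<Rightarrow> bool" where
  "dong P _ \<longleftrightarrow> (\<forall>(sc :: 'k \<Rightarrow> 'a \<Rightarrow> 'a) m. is_algebra P sc m \<longrightarrow> dong_alg P sc m)"

definition lin_span :: "(nat \<Rightarrow> 'i \<Rightarrow> 'i \<Rightarrow> 'k::field) set \<Rightarrow> (nat \<Rightarrow> 'i \<Rightarrow> 'i \<Rightarrow> 'k) set" where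
  "lin_span X = {f. \<exists>F c. finite F \<and> F \<subseteq> X \<and> f = (\<lambda>s u v. \<Sum>g\<in>F. c g * g s u v)}"

text \<open>Manin black product: generators k_- (x) V (x) W (S_2 acts by minus tau (x) tau),
  relations the image of k_- (x) R (x) S under the natural map, which on trees of the
  same shape is r (x) q |-> the tree with vertex labels tensored, and 0 on different shapes.\<close>
definition black :: "('k::field,'i) bq_operad \<Rightarrow> ('k,'j) bq_operad \<Rightarrow> ('k, 'i \<times> 'j) bq_operad" where
  "black P Q = \<lparr> gens = gens P \<times> gens Q,
      swp = (\<lambda>p p'. - (swp P (fst p) (fst p') * swp Q (snd p) (snd p'))),
      rels = lin_span {(\<lambda>s u v. r s (fst u) (fst v) * q s (snd u) (snd v)) | r q.
                         r \<in> rels P \<and> q \<in> rels Q} \<rparr>"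

end

theory Submission
  imports Defs "HOL-Library.Function_Algebras"
begin

definition cf :: "nat \<Rightarrow> nat \<Rightarrow> 'k::field" where "cf N l = (-1)^l * of_nat (N choose l)"

definition YY :: "int \<Rightarrow> int \<Rightarrow> int \<Rightarrow> int \<Rightarrow> int \<Rightarrow> int \<Rightarrow> (int \<Rightarrow> int \<Rightarrow> int \<Rightarrow> 'a::ab_group_add) \<Rightarrow> (int \<Rightarrow> int \<Rightarrow> int \<Rightarrow> 'a)" where
  "YY p1 p2 p3 q1 q2 q3 F = (\<lambda>i j k. F (i+p1) (j+p2) (k+p3) - F (i+q1) (j+q2) (k+q3))"

lemma YY_additive: "additive (YY p1 p2 p3 q1 q2 q3)"
  by standard (simp add: YY_def fun_eq_iff algebra_simps)

lemma funpow_additive: fixes f :: "'a::ab_group_add \<Rightarrow> 'a" assumes "additive f" shows "additive (f ^^ n)"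
proof (induction n)
  case 0
  show ?case by (simp add: additive_def funpow_0)
next
  case (Suc n)
  then show ?case using assms by (simp add: additive_def)
qed

lemma YYpow_additive: "additive (YY p1 p2 p3 q1 q2 q3 ^^ n)"
  by (rule funpow_additive[OF YY_additive])

lemma YY_comm: "YY p1 p2 p3 q1 q2 q3 (YY p1' p2' p3' q1' q2' q3' F) = YY p1' p2' p3' q1' q2' q3' (YY p1 p2 p3 q1 q2 q3 F)"
  by (simp add: YY_def fun_eq_iff algebra_simps add_ac)

lemma funpow_comm1: assumes "\<And>x. f (g x) = g (f x)" shows "f ((g^^n) x) = (g^^n) (f x)"
  by (induction n arbitrary: x) (simp_all add: assms)

lemma funpow_comm: assumes "\<And>x. f (g x) = g (f x)" shows "(f^^m) ((g^^n) x) = (g^^n) ((f^^m) x)"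
proof (induction m arbitrary: x)
  case (Suc m)
  have "(f ^^ Suc m) ((g ^^ n) x) = f ((f^^m) ((g^^n) x))" by simp
  also have "\<dots> = f ((g^^n) ((f^^m) x))" using Suc by simp
  also have "\<dots> = (g^^n) (f ((f^^m) x))" by (rule funpow_comm1[where f=f and g=g, OF assms])
  finally show ?case by simp
qed simp

lemma YYpow_comm1: "YY p1 p2 p3 q1 q2 q3 ((YY p1' p2' p3' q1' q2' q3' ^^ n) F) = (YY p1' p2' p3' q1' q2' q3' ^^ n) (YY p1 p2 p3 q1 q2 q3 F)"
proof (induction n arbitrary: F)
  case (Suc n)
  have "YY p1 p2 p3 q1 q2 q3 ((YY p1' p2' p3' q1' q2' q3' ^^ Suc n) F) = YY p1' p2' p3' q1' q2' q3' (YY p1 p2 p3 q1 q2 q3 ((YY p1' p2' p3' q1' q2' q3' ^^ n) F))"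
    by (simp only: funpow.simps o_apply YY_comm)
  also have "\<dots> = YY p1' p2' p3' q1' q2' q3' ((YY p1' p2' p3' q1' q2' q3' ^^ n) (YY p1 p2 p3 q1 q2 q3 F))"
    by (simp only: Suc)
  finally show ?case by simp
qed simp

lemma YYpow_comm: "(YY p1 p2 p3 q1 q2 q3 ^^ m) ((YY p1' p2' p3' q1' q2' q3' ^^ n) F) = (YY p1' p2' p3' q1' q2' q3' ^^ n) ((YY p1 p2 p3 q1 q2 q3 ^^ m) F)"
  by (rule funpow_comm[where f="YY p1 p2 p3 q1 q2 q3" and g="YY p1' p2' p3' q1' q2' q3'"]) (rule YY_comm)

lemma YYpow_comp:
  assumes "\<And>i j k. L (i+p1) (j+p2) (k+p3) = L i j k" "\<And>i j k. L (i+q1) (j+q2) (k+q3) = L i j k"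
    "\<And>i j k. additive (L i j k)"
  shows "(YY p1 p2 p3 q1 q2 q3 ^^ n) (\<lambda>i j k. L i j k (F i j k)) = (\<lambda>i j k. L i j k ((YY p1 p2 p3 q1 q2 q3 ^^ n) F i j k))"
proof (induction n)
  case (Suc n)
  have "(YY p1 p2 p3 q1 q2 q3 ^^ Suc n) (\<lambda>i j k. L i j k (F i j k)) = YY p1 p2 p3 q1 q2 q3 ((YY p1 p2 p3 q1 q2 q3 ^^ n) (\<lambda>i j k. L i j k (F i j k)))"
    by simp
  also have "\<dots> = YY p1 p2 p3 q1 q2 q3 (\<lambda>i j k. L i j k ((YY p1 p2 p3 q1 q2 q3 ^^ n) F i j k))" by (simp only: Suc)
  also have "\<dots> = (\<lambda>i j k. L i j k ((YY p1 p2 p3 q1 q2 q3 ^^ Suc n) F i j k))"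
    by (simp only: YY_def funpow.simps o_apply assms(1,2) additive.diff[OF assms(3)])
  finally show ?case .
qed simp

lemma YYpow_sum:
  "(YY p1 p2 p3 q1 q2 q3 ^^ n) (\<lambda>i j k. \<Sum>x\<in>A. F x i j k) = (\<lambda>i j k. \<Sum>x\<in>A. (YY p1 p2 p3 q1 q2 q3 ^^ n) (F x) i j k)"
proof (induction n)
  case (Suc n)
  have "(YY p1 p2 p3 q1 q2 q3 ^^ Suc n) (\<lambda>i j k. \<Sum>x\<in>A. F x i j k) = YY p1 p2 p3 q1 q2 q3 ((YY p1 p2 p3 q1 q2 q3 ^^ n) (\<lambda>i j k. \<Sum>x\<in>A. F x i j k))"
    by simp
  also have "\<dots> = YY p1 p2 p3 q1 q2 q3 (\<lambda>i j k. \<Sum>x\<in>A. (YY p1 p2 p3 q1 q2 q3 ^^ n) (F x) i j k)" by (simp only: Suc)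
  also have "\<dots> = (\<lambda>i j k. \<Sum>x\<in>A. (YY p1 p2 p3 q1 q2 q3 ^^ Suc n) (F x) i j k)"
    by (simp only: YY_def funpow.simps o_apply sum_subtractf)
  finally show ?case .
qed simp

lemma YYpow_zero: "(YY p1 p2 p3 q1 q2 q3 ^^ n) 0 = 0"
  by (rule additive.zero[OF YYpow_additive])

lemma YYpow_mono: "(YY p1 p2 p3 q1 q2 q3 ^^ n) F = 0 \<Longrightarrow> n \<le> n' \<Longrightarrow> (YY p1 p2 p3 q1 q2 q3 ^^ n') F = 0"
proof -
  assume a: "(YY p1 p2 p3 q1 q2 q3 ^^ n) F = 0" "n \<le> n'"
  then obtain d where "n' = d + n" by (metis le_add_diff_inverse2)
  then show ?thesis using a by (simp add: funpow_add YYpow_zero)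
qed

lemma Y13_eq: "YY 1 0 0 0 0 1 F = YY 1 0 0 0 1 0 F + YY 0 1 0 0 0 1 F"
  by (simp add: YY_def fun_eq_iff)

lemma key_aux:
  "(YY 1 0 0 0 0 1 ^^ a) U = 0 \<Longrightarrow> (YY 1 0 0 0 1 0 ^^ b) ((YY 0 1 0 0 0 1 ^^ N) U) = 0
   \<Longrightarrow> (YY 0 1 0 0 0 1 ^^ (N + a + b)) U = 0"
proof (induction "a + b" arbitrary: a b U rule: less_induct)
  case less
  let ?A = "YY 1 0 0 0 0 1" and ?B = "YY 1 0 0 0 1 0" and ?C = "YY 0 1 0 0 0 1"
  show ?case
  proof (cases "a = 0")
    case True
    then show ?thesis using less.prems by (simp add: YYpow_zero)
  next
    case a: False
    show ?thesis
    proof (cases "b = 0")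
      case True
      then have "(?C ^^ (a + N)) U = 0" using less.prems by (simp add: funpow_add YYpow_zero)
      then show ?thesis using True by (simp add: add.commute)
    next
      case b: False
      obtain a' where a': "a = Suc a'" using a not0_implies_Suc by blast
      obtain b' where b': "b = Suc b'" using b not0_implies_Suc by blast
      have CU: "?C U = ?A U - ?B U" using Y13_eq[of U] by simp
      have h1: "(?C ^^ (N + a' + b)) (?A U) = 0"
      proof (rule less.hyps)
        show "a' + b < a + b" using a' by simp
        show "(?A ^^ a') (?A U) = 0" using less.prems(1) a' by (simp add: funpow_swap1)
        have "(?B ^^ b) ((?C ^^ N) (?A U)) = ?A ((?B ^^ b) ((?C ^^ N) U))"
          by (simp add: YYpow_comm1)
        then show "(?B ^^ b) ((?C ^^ N) (?A U)) = 0" using less.prems(2)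
          by (simp add: additive.zero[OF YY_additive])
      qed
      have h2: "(?C ^^ (N + a + b')) (?B U) = 0"
      proof (rule less.hyps)
        show "a + b' < a + b" using b' by simp
        have "(?A ^^ a) (?B U) = ?B ((?A ^^ a) U)" by (simp add: YYpow_comm1)
        then show "(?A ^^ a) (?B U) = 0" using less.prems(1) by (simp add: additive.zero[OF YY_additive])
        have "(?B ^^ b') ((?C ^^ N) (?B U)) = (?B ^^ b') (?B ((?C ^^ N) U))"
          by (simp add: YYpow_comm1)
        also have "\<dots> = (?B ^^ b) ((?C ^^ N) U)" using b' by (simp add: funpow_swap1)
        finally show "(?B ^^ b') ((?C ^^ N) (?B U)) = 0" using less.prems(2) by simp
      qed
      have "(?C ^^ (N + a + b)) U = (?C ^^ (N + a' + b)) (?C U)"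
        using a' by (simp add: funpow_swap1)
      also have "\<dots> = (?C ^^ (N + a' + b)) (?A U) - (?C ^^ (N + a' + b)) (?B U)"
        by (simp add: CU additive.diff[OF YYpow_additive])
      also have "(?C ^^ (N + a' + b)) (?B U) = 0" using h2 a' b' by simp
      finally show ?thesis using h1 by (simp add: zero_fun_def)
    qed
  qed
qed

lemma key:
  assumes "T + U23 + U31 = 0"
    and "(YY 1 0 0 0 1 0 ^^ N) T = 0" "(YY 0 1 0 0 0 1 ^^ N) U23 = 0" "(YY 1 0 0 0 0 1 ^^ N) U31 = 0"
  shows "(YY 0 1 0 0 0 1 ^^ (N + N + N)) T = 0"
proof -
  let ?A = "YY 1 0 0 0 0 1" and ?B = "YY 1 0 0 0 1 0" and ?C = "YY 0 1 0 0 0 1"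
  have U31: "U31 = - T - U23" using assms(1) by (simp add: eq_neg_iff_add_eq_0 algebra_simps)
  have "(?B ^^ N) ((?C ^^ N) U31) = - (?C ^^ N) ((?B ^^ N) T) - (?B ^^ N) ((?C ^^ N) U23)"
    by (simp add: U31 additive.diff[OF YYpow_additive] additive.minus[OF YYpow_additive] YYpow_comm)
  also have "\<dots> = 0" using assms(2,3) by (simp add: YYpow_zero)
  finally have "(?C ^^ (N + N + N)) U31 = 0" using key_aux[OF assms(4)] by blast
  moreover have "(?C ^^ (N + N + N)) U23 = 0"
    using YYpow_mono[OF assms(3)] by simp
  moreover have "T = - U23 - U31" using assms(1) by (simp add: eq_neg_iff_add_eq_0 algebra_simps)
  ultimately show ?thesis by (simp add: additive.diff[OF YYpow_additive] additive.minus[OF YYpow_additive])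
qed


lemma cf_Suc: "cf (Suc N) (Suc l) = (cf N (Suc l) - cf N l :: 'k::field)"
  by (simp add: cf_def algebra_simps)

lemma cf_0[simp]: "cf N 0 = 1" by (simp add: cf_def)

lemma cf_big[simp]: "N < l \<Longrightarrow> cf N l = 0" by (simp add: cf_def binomial_eq_0)

lemma pascal:
  assumes vs: "vector_space sc"
  shows "(\<Sum>l\<le>N. sc (cf N l) (H (Suc N - l) l)) - (\<Sum>l\<le>N. sc (cf N l) (H (N - l) (Suc l)))
       = (\<Sum>l\<le>Suc N. sc (cf (Suc N) l) (H (Suc N - l) l))"
proof -
  interpret vector_space sc by (rule vs)
  have r: "(\<Sum>l\<le>Suc N. sc (cf (Suc N) l) (H (Suc N - l) l))
     = H (Suc N) 0 + (\<Sum>l\<le>N. sc (cf N (Suc l)) (H (N - l) (Suc l))) - (\<Sum>l\<le>N. sc (cf N l) (H (N - l) (Suc l)))"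
    by (subst sum.atMost_Suc_shift) (simp add: cf_Suc scale_left_diff_distrib sum_subtractf del: sum.atMost_Suc)
  have "(\<Sum>l\<le>N. sc (cf N l) (H (Suc N - l) l)) = (\<Sum>l\<le>Suc N. sc (cf N l) (H (Suc N - l) l))"
    by simp
  also have "\<dots> = H (Suc N) 0 + (\<Sum>l\<le>N. sc (cf N (Suc l)) (H (N - l) (Suc l)))"
    by (subst sum.atMost_Suc_shift) (simp del: sum.atMost_Suc)
  finally show ?thesis using r by simp
qed

lemma YYpow_formula:
  assumes vs: "vector_space sc"
  shows "(YY p1 p2 p3 q1 q2 q3 ^^ N) F i j k = (\<Sum>l\<le>N. sc (cf N l)
     (F (i + int (N-l)*p1 + int l*q1) (j + int (N-l)*p2 + int l*q2) (k + int (N-l)*p3 + int l*q3)))"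
proof (induction N arbitrary: F)
  case 0
  interpret vector_space sc by (rule vs)
  show ?case by simp
next
  case (Suc N)
  interpret vector_space sc by (rule vs)
  define H where "H u v = F (i + int u*p1 + int v*q1) (j + int u*p2 + int v*q2) (k + int u*p3 + int v*q3)" for u v
  have "(YY p1 p2 p3 q1 q2 q3 ^^ Suc N) F i j k = (YY p1 p2 p3 q1 q2 q3 ^^ N) (YY p1 p2 p3 q1 q2 q3 F) i j k"
    by (simp only: funpow_Suc_right o_apply)
  also have "\<dots> = (\<Sum>l\<le>N. sc (cf N l) (H (Suc N - l) l - H (N - l) (Suc l)))"
    unfolding Suc YY_def H_def
    by (intro sum.cong refl) (auto simp: of_nat_diff algebra_simps Suc_diff_le)
  also have "\<dots> = (\<Sum>l\<le>Suc N. sc (cf (Suc N) l) (H (Suc N - l) l))"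
    by (simp add: scale_right_diff_distrib sum_subtractf pascal[OF vs])
  also have "\<dots> = (\<Sum>l\<le>Suc N. sc (cf (Suc N) l)
     (F (i + int (Suc N-l)*p1 + int l*q1) (j + int (Suc N-l)*p2 + int l*q2) (k + int (Suc N-l)*p3 + int l*q3)))"
    by (simp add: H_def)
  finally show ?case .
qed

lemma Y12_formula: "vector_space sc \<Longrightarrow> (YY 1 0 0 0 1 0 ^^ N) F i j k = (\<Sum>l\<le>N. sc (cf N l) (F (i + int (N-l)) (j + int l) k))"
  by (simp add: YYpow_formula)
lemma Y23_formula: "vector_space sc \<Longrightarrow> (YY 0 1 0 0 0 1 ^^ N) F i j k = (\<Sum>l\<le>N. sc (cf N l) (F i (j + int (N-l)) (k + int l)))"
  by (simp add: YYpow_formula)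
lemma Y13_formula: "vector_space sc \<Longrightarrow> (YY 1 0 0 0 0 1 ^^ N) F i j k = (\<Sum>l\<le>N. sc (cf N l) (F (i + int (N-l)) j (k + int l)))"
  by (simp add: YYpow_formula)

lemma alg_vs: "is_algebra Op sc m \<Longrightarrow> vector_space sc"
  unfolding is_algebra_def by blast
lemma alg_add1: "is_algebra Op sc m \<Longrightarrow> i \<in> gens Op \<Longrightarrow> m i (x + y) z = m i x z + m i y z"
  unfolding is_algebra_def by blast
lemma alg_add2: "is_algebra Op sc m \<Longrightarrow> i \<in> gens Op \<Longrightarrow> m i x (y + z) = m i x y + m i x z"
  unfolding is_algebra_def by blast
lemma alg_sc1: "is_algebra Op sc m \<Longrightarrow> i \<in> gens Op \<Longrightarrow> m i (sc c x) y = sc c (m i x y)"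
  unfolding is_algebra_def by blast
lemma alg_sym: "is_algebra Op sc m \<Longrightarrow> i \<in> gens Op \<Longrightarrow> m i y x = (\<Sum>k\<in>gens Op. sc (swp Op k i) (m k x y))"
  unfolding is_algebra_def by blast
lemma alg_rel: "is_algebra Op sc m \<Longrightarrow> r \<in> rels Op \<Longrightarrow>
   (\<Sum>s<3. \<Sum>i1\<in>gens Op. \<Sum>i2\<in>gens Op.
           sc (r s i1 i2) (m i2 (m i1 (x s) (x ((s + 1) mod 3))) (x ((s + 2) mod 3)))) = 0"
  unfolding is_algebra_def by blast

lemma alg_additive1: "is_algebra Op sc m \<Longrightarrow> i \<in> gens Op \<Longrightarrow> additive (\<lambda>x. m i x z)"
  by standard (simp add: alg_add1)

lemma sc_additive: "vector_space sc \<Longrightarrow> additive (sc c)"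
  by standard (simp add: vector_space.vector_space_assms(1))

lemma m_lin1:
  assumes alg: "is_algebra Op sc m" and v: "v \<in> gens Op"
  shows "m v (\<Sum>x\<in>A. sc (f x) (g x)) z = (\<Sum>x\<in>A. sc (f x) (m v (g x) z))"
  using additive.sum[OF alg_additive1[OF alg v], of "\<lambda>x. sc (f x) (g x)" A]
  by (simp add: alg_sc1[OF alg v])

lemma opr_lin1:
  assumes alg: "is_algebra Op sc m"
  shows "opr Op sc m c (\<Sum>x\<in>A. sc (f x) (g x)) z = (\<Sum>x\<in>A. sc (f x) (opr Op sc m c (g x) z))"
proof -
  interpret vector_space sc by (rule alg_vs[OF alg])
  have "opr Op sc m c (\<Sum>x\<in>A. sc (f x) (g x)) z = (\<Sum>v\<in>gens Op. \<Sum>x\<in>A. sc (c v) (sc (f x) (m v (g x) z)))"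
    unfolding opr_def by (intro sum.cong refl) (simp add: m_lin1[OF alg] scale_sum_right)
  also have "\<dots> = (\<Sum>x\<in>A. \<Sum>v\<in>gens Op. sc (f x) (sc (c v) (m v (g x) z)))"
    by (subst sum.swap) (simp add: mult.commute)
  also have "\<dots> = (\<Sum>x\<in>A. sc (f x) (opr Op sc m c (g x) z))"
    unfolding opr_def by (simp add: scale_sum_right)
  finally show ?thesis .
qed

lemma sum_delta2:
  assumes "finite G" "u \<in> G" "v \<in> G" "vector_space sc"
  shows "(\<Sum>i1\<in>G. \<Sum>i2\<in>G. sc (if i1 = u \<and> i2 = v then 1 else 0) (X i1 i2)) = X u v"
proof -
  interpret vector_space sc by fact
  have "(\<Sum>i1\<in>G. \<Sum>i2\<in>G. sc (if i1 = u \<and> i2 = v then 1 else 0) (X i1 i2))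
      = (\<Sum>i1\<in>G. if i1 = u then (\<Sum>i2\<in>G. if i2 = v then X i1 i2 else 0) else 0)"
    by (intro sum.cong refl) (auto intro!: sum.cong)
  also have "\<dots> = X u v" using assms by simp
  finally show ?thesis .
qed

lemma opr_ind:
  assumes "finite (gens Op)" "u \<in> gens Op" "vector_space sc"
  shows "opr Op sc m (\<lambda>\<nu>. if \<nu> = u then 1 else 0) x y = m u x y"
proof -
  interpret vector_space sc by fact
  have "opr Op sc m (\<lambda>\<nu>. if \<nu> = u then 1 else 0) x y = (\<Sum>\<nu>\<in>gens Op. if \<nu> = u then m \<nu> x y else 0)"
    unfolding opr_def by (intro sum.cong refl) auto
  then show ?thesis using assms by simp
qed

lemma loc_Y12:
  assumes fin: "finite (gens Op)" and alg: "is_algebra Op sc m" and u: "u \<in> gens Op"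
    and loc: "local_dist Op sc m a b"
  shows "\<exists>N. (YY 1 0 0 0 1 0 ^^ N) (\<lambda>i j k. m u (a i) (b j)) = 0"
proof -
  have vs: "vector_space sc" by (rule alg_vs[OF alg])
  obtain N where N: "\<And>s t. (\<Sum>k\<le>N. sc ((-1) ^ k * of_nat (N choose k))
                    (opr Op sc m (\<lambda>\<nu>. if \<nu> = u then 1 else 0) (a (s + int N - int k)) (b (t + int k)))) = 0"
    using loc unfolding local_dist_def by blast
  have "(YY 1 0 0 0 1 0 ^^ N) (\<lambda>i j k. m u (a i) (b j)) i j k = 0" for i j k
  proof -
    have "(YY 1 0 0 0 1 0 ^^ N) (\<lambda>i j k. m u (a i) (b j)) i j k = (\<Sum>k\<le>N. sc ((-1) ^ k * of_nat (N choose k))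
                    (opr Op sc m (\<lambda>\<nu>. if \<nu> = u then 1 else 0) (a (i + int N - int k)) (b (j + int k))))"
      unfolding Y12_formula[OF vs] opr_ind[OF fin u vs] cf_def
      by (intro sum.cong refl) (auto simp: of_nat_diff algebra_simps)
    then show ?thesis using N by simp
  qed
  then show ?thesis by (auto simp: fun_eq_iff)
qed

lemma loc_Y23:
  assumes fin: "finite (gens Op)" and alg: "is_algebra Op sc m" and u: "u \<in> gens Op"
    and loc: "local_dist Op sc m b d"
  shows "\<exists>N. (YY 0 1 0 0 0 1 ^^ N) (\<lambda>i j k. m u (b j) (d k)) = 0"
proof -
  have vs: "vector_space sc" by (rule alg_vs[OF alg])
  obtain N where N: "\<And>s t. (\<Sum>k\<le>N. sc ((-1) ^ k * of_nat (N choose k))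
                    (opr Op sc m (\<lambda>\<nu>. if \<nu> = u then 1 else 0) (b (s + int N - int k)) (d (t + int k)))) = 0"
    using loc unfolding local_dist_def by blast
  have "(YY 0 1 0 0 0 1 ^^ N) (\<lambda>i j k. m u (b j) (d k)) i j k = 0" for i j k
  proof -
    have "(YY 0 1 0 0 0 1 ^^ N) (\<lambda>i j k. m u (b j) (d k)) i j k = (\<Sum>k'\<le>N. sc ((-1) ^ k' * of_nat (N choose k'))
                    (opr Op sc m (\<lambda>\<nu>. if \<nu> = u then 1 else 0) (b (j + int N - int k')) (d (k + int k'))))"
      unfolding Y23_formula[OF vs] opr_ind[OF fin u vs] cf_def
      by (intro sum.cong refl) (auto simp: of_nat_diff algebra_simps)
    then show ?thesis using N by simp
  qed
  then show ?thesis by (auto simp: fun_eq_iff)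
qed

lemma loc_Y13:
  assumes fin: "finite (gens Op)" and alg: "is_algebra Op sc m" and u: "u \<in> gens Op"
    and loc: "local_dist Op sc m a d"
  shows "\<exists>N. (YY 1 0 0 0 0 1 ^^ N) (\<lambda>i j k. m u (a i) (d k)) = 0"
proof -
  have vs: "vector_space sc" by (rule alg_vs[OF alg])
  obtain N where N: "\<And>s t. (\<Sum>k\<le>N. sc ((-1) ^ k * of_nat (N choose k))
                    (opr Op sc m (\<lambda>\<nu>. if \<nu> = u then 1 else 0) (a (s + int N - int k)) (d (t + int k)))) = 0"
    using loc unfolding local_dist_def by blast
  have "(YY 1 0 0 0 0 1 ^^ N) (\<lambda>i j k. m u (a i) (d k)) i j k = 0" for i j k
  proof -
    have "(YY 1 0 0 0 0 1 ^^ N) (\<lambda>i j k. m u (a i) (d k)) i j k = (\<Sum>k'\<le>N. sc ((-1) ^ k' * of_nat (N choose k'))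
                    (opr Op sc m (\<lambda>\<nu>. if \<nu> = u then 1 else 0) (a (i + int N - int k')) (d (k + int k'))))"
      unfolding Y13_formula[OF vs] opr_ind[OF fin u vs] cf_def
      by (intro sum.cong refl) (auto simp: of_nat_diff algebra_simps)
    then show ?thesis using N by simp
  qed
  then show ?thesis by (auto simp: fun_eq_iff)
qed

lemma finite_uniform:
  assumes "finite A" "\<forall>x\<in>A. \<exists>N::nat. P x N" "\<And>x N N'. P x N \<Longrightarrow> N \<le> N' \<Longrightarrow> P x N'"
  shows "\<exists>N. \<forall>x\<in>A. P x N"
  using assms(1,2)
proof (induction A rule: finite_induct)
  case empty
  then show ?case by simp
next
  case (insert y A)
  then obtain N1 where N1: "\<forall>x\<in>A. P x N1" by auto
  obtain N2 where N2: "P y N2" using insert.prems by auto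
  have "\<forall>x\<in>insert y A. P x (max N1 N2)"
    using N1 N2 assms(3) by (metis insert_iff max.cobounded1 max.cobounded2)
  then show ?case by blast
qed

lemma sum3: "(\<Sum>s<3. f s) = f 0 + f 1 + f (2::nat)"
  by (simp add: numeral_3_eq_3 lessThan_Suc add_ac numeral_2_eq_2)

lemma suff:
  assumes fin: "finite (gens Op)" and alg: "is_algebra Op sc m"
    and crit: "\<And>u v. u \<in> gens Op \<Longrightarrow> v \<in> gens Op \<Longrightarrow> \<exists>\<rho>\<in>rels Op. \<forall>i1\<in>gens Op. \<forall>i2\<in>gens Op.
          \<rho> 0 i1 i2 = (if i1 = u \<and> i2 = v then 1 else 0)"
  shows "dong_alg Op sc m"
  unfolding dong_alg_def
proof (intro allI impI)
  fix a b d c n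
  assume "local_dist Op sc m a b \<and> local_dist Op sc m b d \<and> local_dist Op sc m a d"
  then have lab: "local_dist Op sc m a b" and lbd: "local_dist Op sc m b d" and lad: "local_dist Op sc m a d"
    by auto
  have vs: "vector_space sc" by (rule alg_vs[OF alg])
  interpret vector_space sc by (rule vs)
  let ?A = "YY 1 0 0 0 0 1" and ?B = "YY 1 0 0 0 1 0" and ?C = "YY 0 1 0 0 0 1"
  define PP where "PP u N \<longleftrightarrow> (?B ^^ N) (\<lambda>i j k. m u (a i) (b j)) = 0 \<and>
      (?C ^^ N) (\<lambda>i j k. m u (b j) (d k)) = 0 \<and> (?A ^^ N) (\<lambda>i j k. m u (a i) (d k)) = 0" for u N
  have "\<exists>N. \<forall>u\<in>gens Op. PP u N"
  proof (rule finite_uniform[OF fin])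
    show "\<forall>u\<in>gens Op. \<exists>N. PP u N"
    proof
      fix u assume u: "u \<in> gens Op"
      obtain N1 where N1: "(?B ^^ N1) (\<lambda>i j k. m u (a i) (b j)) = 0" using loc_Y12[OF fin alg u lab] by blast
      obtain N2 where N2: "(?C ^^ N2) (\<lambda>i j k. m u (b j) (d k)) = 0" using loc_Y23[OF fin alg u lbd] by blast
      obtain N3 where N3: "(?A ^^ N3) (\<lambda>i j k. m u (a i) (d k)) = 0" using loc_Y13[OF fin alg u lad] by blast
      have "PP u (max N1 (max N2 N3))"
        unfolding PP_def using YYpow_mono[OF N1] YYpow_mono[OF N2] YYpow_mono[OF N3] by simp
      then show "\<exists>N. PP u N" by blast
    qed
  next
    fix u N N' assume "PP u N" "N \<le> N'"
    then show "PP u N'" unfolding PP_def using YYpow_mono by blast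
  qed
  then obtain N where N: "\<And>u. u \<in> gens Op \<Longrightarrow> PP u N" by blast
  have T0: "(?C ^^ (N + N + N)) (\<lambda>i j k. m v (m u (a i) (b j)) (d k)) = 0"
    if u: "u \<in> gens Op" and v: "v \<in> gens Op" for u v
  proof -
    obtain \<rho> where \<rho>: "\<rho> \<in> rels Op" and \<rho>0: "\<And>i1 i2. i1 \<in> gens Op \<Longrightarrow> i2 \<in> gens Op \<Longrightarrow>
          \<rho> 0 i1 i2 = (if i1 = u \<and> i2 = v then 1 else 0)"
      using crit[OF u v] by blast
    define T where "T = (\<lambda>i j k. m v (m u (a i) (b j)) (d k))"
    define U23 where "U23 = (\<lambda>i j k. \<Sum>i1\<in>gens Op. \<Sum>i2\<in>gens Op. sc (\<rho> 1 i1 i2) (m i2 (m i1 (b j) (d k)) (a i)))"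
    define U31 where "U31 = (\<lambda>i j k. \<Sum>i1\<in>gens Op. \<Sum>i2\<in>gens Op. sc (\<rho> 2 i1 i2) (m i2 (m i1 (d k) (a i)) (b j)))"
    have s0: "(\<Sum>i1\<in>gens Op. \<Sum>i2\<in>gens Op. sc (\<rho> 0 i1 i2) (X i1 i2)) = X u v" for X
    proof -
      have "(\<Sum>i1\<in>gens Op. \<Sum>i2\<in>gens Op. sc (\<rho> 0 i1 i2) (X i1 i2))
          = (\<Sum>i1\<in>gens Op. \<Sum>i2\<in>gens Op. sc (if i1 = u \<and> i2 = v then 1 else 0) (X i1 i2))"
        by (intro sum.cong refl) (simp add: \<rho>0)
      also have "\<dots> = X u v" by (rule sum_delta2[OF fin u v vs])
      finally show ?thesis .
    qed
    have rel: "T + U23 + U31 = 0"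
    proof (rule ext)+
      fix i j k
      define x where "x = (\<lambda>s::nat. if s = 0 then a i else if s = 1 then b j else d k)"
      have "(\<Sum>s<3. \<Sum>i1\<in>gens Op. \<Sum>i2\<in>gens Op.
           sc (\<rho> s i1 i2) (m i2 (m i1 (x s) (x ((s + 1) mod 3))) (x ((s + 2) mod 3)))) = 0"
        by (rule alg_rel[OF alg \<rho>])
      then have "(\<Sum>i1\<in>gens Op. \<Sum>i2\<in>gens Op. sc (\<rho> 0 i1 i2) (m i2 (m i1 (a i) (b j)) (d k))) +
           (\<Sum>i1\<in>gens Op. \<Sum>i2\<in>gens Op. sc (\<rho> 1 i1 i2) (m i2 (m i1 (b j) (d k)) (a i))) +
           (\<Sum>i1\<in>gens Op. \<Sum>i2\<in>gens Op. sc (\<rho> 2 i1 i2) (m i2 (m i1 (d k) (a i)) (b j))) = 0"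
        unfolding sum3 by (simp add: x_def)
      then show "(T + U23 + U31) i j k = 0 i j k"
        unfolding s0 by (simp add: T_def U23_def U31_def)
    qed
    have hT: "(?B ^^ N) T = 0"
    proof -
      have "(?B ^^ N) T = (\<lambda>i j k. m v ((?B ^^ N) (\<lambda>i j k. m u (a i) (b j)) i j k) (d k))"
        unfolding T_def
        by (rule YYpow_comp[where L="\<lambda>i j k x. m v x (d k)"]) (simp_all add: alg_additive1[OF alg v])
      also have "\<dots> = 0" using N[OF u] unfolding PP_def
        by (simp add: fun_eq_iff additive.zero[OF alg_additive1[OF alg v]])
      finally show ?thesis .
    qed
    have hU23: "(?C ^^ N) U23 = 0"
    proof -
      have "(?C ^^ N) U23 = (\<lambda>i j k. \<Sum>i1\<in>gens Op. \<Sum>i2\<in>gens Op. sc (\<rho> 1 i1 i2) (m i2 ((?C ^^ N) (\<lambda>i j k. m i1 (b j) (d k)) i j k) (a i)))"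
        unfolding U23_def YYpow_sum
      proof (intro ext sum.cong refl)
        fix i j k i1 i2 assume "i1 \<in> gens Op" "i2 \<in> gens Op"
        then show "(?C ^^ N) (\<lambda>i j k. sc (\<rho> 1 i1 i2) (m i2 (m i1 (b j) (d k)) (a i))) i j k =
            sc (\<rho> 1 i1 i2) (m i2 ((?C ^^ N) (\<lambda>i j k. m i1 (b j) (d k)) i j k) (a i))"
          by (subst YYpow_comp[where L="\<lambda>i j k x. sc (\<rho> 1 i1 i2) (m i2 x (a i))"])
             (simp_all add: additive_def alg_add1[OF alg] scale_right_distrib)
      qed
      also have "\<dots> = 0" using N unfolding PP_def
        by (simp add: fun_eq_iff additive.zero[OF alg_additive1[OF alg]])
      finally show ?thesis .
    qed
    have hU31: "(?A ^^ N) U31 = 0"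
    proof -
      have U31': "U31 = (\<lambda>i j k. \<Sum>i1\<in>gens Op. \<Sum>i2\<in>gens Op. sc (\<rho> 2 i1 i2)
          (m i2 (\<Sum>\<kappa>\<in>gens Op. sc (swp Op \<kappa> i1) (m \<kappa> (a i) (d k))) (b j)))"
        unfolding U31_def
      proof (intro ext sum.cong refl)
        fix i j k i1 i2 assume i1: "i1 \<in> gens Op"
        show "sc (\<rho> 2 i1 i2) (m i2 (m i1 (d k) (a i)) (b j)) = sc (\<rho> 2 i1 i2)
          (m i2 (\<Sum>\<kappa>\<in>gens Op. sc (swp Op \<kappa> i1) (m \<kappa> (a i) (d k))) (b j))"
          using alg_sym[OF alg i1, of "d k" "a i"] by (simp only:)
      qed
      have "(?A ^^ N) U31 = (\<lambda>i j k. \<Sum>i1\<in>gens Op. \<Sum>i2\<in>gens Op. sc (\<rho> 2 i1 i2)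
          (m i2 (\<Sum>\<kappa>\<in>gens Op. sc (swp Op \<kappa> i1) ((?A ^^ N) (\<lambda>i j k. m \<kappa> (a i) (d k)) i j k)) (b j)))"
        unfolding U31' YYpow_sum
      proof (intro ext sum.cong refl)
        fix i j k i1 i2 assume "i1 \<in> gens Op" "i2 \<in> gens Op"
        have "(?A ^^ N) (\<lambda>i j k. sc (\<rho> 2 i1 i2) (m i2 (\<Sum>\<kappa>\<in>gens Op. sc (swp Op \<kappa> i1) (m \<kappa> (a i) (d k))) (b j))) i j k
            = sc (\<rho> 2 i1 i2) (m i2 ((?A ^^ N) (\<lambda>i j k. \<Sum>\<kappa>\<in>gens Op. sc (swp Op \<kappa> i1) (m \<kappa> (a i) (d k))) i j k) (b j))"
          using \<open>i2 \<in> gens Op\<close>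
          by (subst YYpow_comp[where L="\<lambda>i j k x. sc (\<rho> 2 i1 i2) (m i2 x (b j))"])
             (simp_all add: additive_def alg_add1[OF alg] scale_right_distrib)
        also have "(?A ^^ N) (\<lambda>i j k. \<Sum>\<kappa>\<in>gens Op. sc (swp Op \<kappa> i1) (m \<kappa> (a i) (d k))) i j k
           = (\<Sum>\<kappa>\<in>gens Op. sc (swp Op \<kappa> i1) ((?A ^^ N) (\<lambda>i j k. m \<kappa> (a i) (d k)) i j k))"
          unfolding YYpow_sum
          by (intro sum.cong refl, subst YYpow_comp[where L="\<lambda>i j k x. sc (swp Op \<kappa> i1) x" for \<kappa>])
             (simp_all add: additive_def scale_right_distrib)
        finally show "(?A ^^ N) (\<lambda>i j k. sc (\<rho> 2 i1 i2) (m i2 (\<Sum>\<kappa>\<in>gens Op. sc (swp Op \<kappa> i1) (m \<kappa> (a i) (d k))) (b j))) i j k =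
         sc (\<rho> 2 i1 i2) (m i2 (\<Sum>\<kappa>\<in>gens Op. sc (swp Op \<kappa> i1) ((?A ^^ N) (\<lambda>i j k. m \<kappa> (a i) (d k)) i j k)) (b j))" .
      qed
      also have "\<dots> = 0" using N unfolding PP_def
        by (simp add: fun_eq_iff additive.zero[OF alg_additive1[OF alg]])
      finally show ?thesis .
    qed
      show ?thesis using key[OF rel hT hU23 hU31] unfolding T_def .
  qed
  show "local_dist Op sc m (nprod Op sc m c n a b) d"
    unfolding local_dist_def
  proof
    fix c'
    let ?M = "N+N+N"
    define G where "G = (\<lambda>i j k. opr Op sc m c' (opr Op sc m c (a i) (b j)) (d k))"
    have G_eq: "G = (\<lambda>i j k. \<Sum>v\<in>gens Op. \<Sum>u\<in>gens Op. sc (c' v) (sc (c u) (m v (m u (a i) (b j)) (d k))))"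
      unfolding G_def opr_def by (intro ext sum.cong refl) (simp add: m_lin1[OF alg] scale_sum_right)
    have GM: "(?C ^^ ?M) G = 0"
    proof -
      have "(?C ^^ ?M) G = (\<lambda>i j k. \<Sum>v\<in>gens Op. \<Sum>u\<in>gens Op. sc (c' v) (sc (c u) ((?C ^^ ?M) (\<lambda>i j k. m v (m u (a i) (b j)) (d k)) i j k)))"
        unfolding G_eq YYpow_sum
        by (intro ext sum.cong refl, subst YYpow_comp[where L="\<lambda>i j k x. sc (c' v) (sc (c u) x)" for u v])
           (simp_all add: additive_def scale_right_distrib)
      also have "\<dots> = 0" by (simp add: T0 fun_eq_iff)
      finally show ?thesis .
    qed
    show "\<exists>M. \<forall>s t. (\<Sum>k\<le>M. sc ((- 1) ^ k * of_nat (M choose k))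
            (opr Op sc m c' (nprod Op sc m c n a b (s + int M - int k)) (d (t + int k)))) = 0"
    proof (intro exI allI)
      fix s t
      have "(\<Sum>k\<le>?M. sc ((- 1) ^ k * of_nat (?M choose k))
            (opr Op sc m c' (nprod Op sc m c n a b (s + int ?M - int k)) (d (t + int k))))
          = (\<Sum>k\<le>?M. \<Sum>l\<le>n. sc (cf ?M k * cf n l) (G (int n - int l) (s + int ?M - int k + int l) (t + int k)))"
        unfolding nprod_def opr_lin1[OF alg] G_def cf_def by (simp add: scale_sum_right)
      also have "\<dots> = (\<Sum>l\<le>n. sc (cf n l) ((?C ^^ ?M) G (int n - int l) (s + int l) t))"
        unfolding Y23_formula[OF vs] scale_sum_right
        by (subst sum.swap) (intro sum.cong refl; simp add: mult.commute of_nat_diff algebra_simps)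
      also have "\<dots> = 0" by (simp add: GM)
      finally show "(\<Sum>k\<le>?M. sc ((- 1) ^ k * of_nat (?M choose k))
            (opr Op sc m c' (nprod Op sc m c n a b (s + int ?M - int k)) (d (t + int k)))) = 0" .
    qed
  qed
qed

section \<open>Counterexample algebra\<close>

lemma smult_sum_right: "smult a (\<Sum>x\<in>A. f x) = (\<Sum>x\<in>A. smult a (f x))"
  by (induction A rule: infinite_finite_induct) (simp_all add: smult_add_right)

definition EE :: "('k::field,'i) bq_operad \<Rightarrow> ('i \<Rightarrow> nat) \<Rightarrow> ('i \<Rightarrow> 'i \<Rightarrow> 'k) \<Rightarrow> 'i \<Rightarrow> 'k poly" where
  "EE P idx \<Phi> \<nu> = (\<Sum>\<mu>\<in>gens P. monom (\<Phi> \<nu> \<mu>) (4 + idx \<mu>))"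

definition EE' :: "('k::field,'i) bq_operad \<Rightarrow> ('i \<Rightarrow> nat) \<Rightarrow> ('i \<Rightarrow> 'i \<Rightarrow> 'k) \<Rightarrow> 'i \<Rightarrow> 'k poly" where
  "EE' P idx \<Phi> \<mu> = (\<Sum>k\<in>gens P. smult (swp P k \<mu>) (EE P idx \<Phi> k))"

definition gam :: "('k::field,'i) bq_operad \<Rightarrow> ('i \<Rightarrow> nat) \<Rightarrow> 'i \<Rightarrow> 'k poly \<Rightarrow> 'k poly \<Rightarrow> 'k" where
  "gam P idx \<mu> p q = coeff p (4 + idx \<mu>) * coeff q 2 + coeff p 2 * (\<Sum>k\<in>gens P. swp P k \<mu> * coeff q (4 + idx k))"

definition mm :: "('k::field,'i) bq_operad \<Rightarrow> ('i \<Rightarrow> nat) \<Rightarrow> ('i \<Rightarrow> 'i \<Rightarrow> 'k) \<Rightarrow> 'i \<Rightarrow> 'k poly \<Rightarrow> 'k poly \<Rightarrow> 'k poly" where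
  "mm P idx \<Phi> \<mu> p q = smult (coeff p 0 * coeff q 1) (EE P idx \<Phi> \<mu>) + smult (coeff p 1 * coeff q 0) (EE' P idx \<Phi> \<mu>)
     + monom (gam P idx \<mu> p q) 3"

lemma coeff_EE_small: "n < 4 \<Longrightarrow> coeff (EE P idx \<Phi> \<nu>) n = 0"
  by (simp add: EE_def coeff_sum)

lemma coeff_EE'_small: "n < 4 \<Longrightarrow> coeff (EE' P idx \<Phi> \<nu>) n = 0"
  by (simp add: EE'_def coeff_sum coeff_EE_small)

lemma coeff_EE_idx:
  assumes "finite (gens P)" "inj_on idx (gens P)" "\<mu>0 \<in> gens P"
  shows "coeff (EE P idx \<Phi> \<nu>) (4 + idx \<mu>0) = \<Phi> \<nu> \<mu>0"
proof -
  have "coeff (EE P idx \<Phi> \<nu>) (4 + idx \<mu>0) = (\<Sum>\<mu>\<in>gens P. if \<mu> = \<mu>0 then \<Phi> \<nu> \<mu> else 0)"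
    unfolding EE_def coeff_sum coeff_monom
    using assms(2,3) by (intro sum.cong refl) (auto dest: inj_onD)
  then show ?thesis using assms by simp
qed

lemma coeff_EE'_idx:
  assumes "finite (gens P)" "inj_on idx (gens P)" "\<mu>0 \<in> gens P"
  shows "coeff (EE' P idx \<Phi> \<nu>) (4 + idx \<mu>0) = (\<Sum>k\<in>gens P. swp P k \<nu> * \<Phi> k \<mu>0)"
  unfolding EE'_def coeff_sum coeff_smult using coeff_EE_idx[OF assms] by simp

lemma coeff_mm_small: "n < 3 \<Longrightarrow> coeff (mm P idx \<Phi> \<mu> p q) n = 0"
  by (simp add: mm_def coeff_EE_small coeff_EE'_small)

lemma coeff_mm_idx:
  assumes "finite (gens P)" "inj_on idx (gens P)" "\<mu>0 \<in> gens P"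
  shows "coeff (mm P idx \<Phi> \<mu> p q) (4 + idx \<mu>0) =
     coeff p 0 * coeff q 1 * \<Phi> \<mu> \<mu>0 + coeff p 1 * coeff q 0 * (\<Sum>k\<in>gens P. swp P k \<mu> * \<Phi> k \<mu>0)"
  by (simp add: mm_def coeff_EE_idx[OF assms] coeff_EE'_idx[OF assms])

lemma mm_tree:
  assumes "finite (gens P)" "inj_on idx (gens P)" "i2 \<in> gens P"
  shows "mm P idx \<Phi> i2 (mm P idx \<Phi> i1 x y) z =
    monom ((coeff x 0 * coeff y 1 * \<Phi> i1 i2 + coeff x 1 * coeff y 0 * (\<Sum>k\<in>gens P. swp P k i1 * \<Phi> k i2)) * coeff z 2) 3"
  by (simp add: mm_def[of P idx \<Phi> i2] gam_def coeff_mm_small coeff_mm_idx[OF assms])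

lemma mm_add1: "mm P idx \<Phi> i (x + y) z = mm P idx \<Phi> i x z + mm P idx \<Phi> i y z"
  by (simp add: mm_def gam_def algebra_simps smult_add_left add_monom[symmetric])

lemma mm_add2: "mm P idx \<Phi> i x (y + z) = mm P idx \<Phi> i x y + mm P idx \<Phi> i x z"
  by (simp add: mm_def gam_def algebra_simps smult_add_left add_monom[symmetric] sum.distrib)

lemma mm_sc1: "mm P idx \<Phi> i (smult c x) y = smult c (mm P idx \<Phi> i x y)"
  by (simp add: mm_def gam_def algebra_simps smult_add_right smult_monom)

lemma mm_sc2: "mm P idx \<Phi> i x (smult c y) = smult c (mm P idx \<Phi> i x y)"
  by (simp add: mm_def gam_def algebra_simps smult_add_right smult_monom sum_distrib_left)


lemma inv_sum:
  assumes inv: "\<forall>i\<in>gens P. \<forall>j\<in>gens P. (\<Sum>k\<in>gens P. swp P i k * swp P k j) = (if i = j then 1 else 0)"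
    and fin: "finite (gens P)" and i: "i \<in> gens P"
  shows "(\<Sum>l\<in>gens P. (\<Sum>k\<in>gens P. swp P l k * swp P k i) * f l) = (f i :: 'k::field)"
proof -
  have "(\<Sum>l\<in>gens P. (\<Sum>k\<in>gens P. swp P l k * swp P k i) * f l) = (\<Sum>l\<in>gens P. if l = i then f l else 0)"
    using inv i by (intro sum.cong refl) auto
  then show ?thesis using fin i by simp
qed

lemma inv_sum_poly:
  assumes inv: "\<forall>i\<in>gens P. \<forall>j\<in>gens P. (\<Sum>k\<in>gens P. swp P i k * swp P k j) = (if i = j then 1 else 0)"
    and fin: "finite (gens P)" and i: "i \<in> gens P"
  shows "(\<Sum>l\<in>gens P. smult (\<Sum>k\<in>gens P. swp P l k * swp P k i) (f l)) = (f i :: 'k::field poly)"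
proof -
  have "(\<Sum>l\<in>gens P. smult (\<Sum>k\<in>gens P. swp P l k * swp P k i) (f l)) = (\<Sum>l\<in>gens P. if l = i then f l else 0)"
    using inv i by (intro sum.cong refl) auto
  then show ?thesis using fin i by simp
qed

lemma mm_sym:
  assumes inv: "\<forall>i\<in>gens P. \<forall>j\<in>gens P. (\<Sum>k\<in>gens P. swp P i k * swp P k j) = (if i = j then 1 else 0)"
    and fin: "finite (gens P)" and i: "i \<in> gens P"
  shows "mm P idx \<Phi> i y x = (\<Sum>k\<in>gens P. smult (swp P k i) (mm P idx \<Phi> k x y))"
proof -
  have f2: "(\<Sum>k\<in>gens P. smult (swp P k i) (EE' P idx \<Phi> k)) = EE P idx \<Phi> i"
  proof -
    have "(\<Sum>k\<in>gens P. smult (swp P k i) (EE' P idx \<Phi> k))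
        = (\<Sum>k\<in>gens P. \<Sum>l\<in>gens P. smult (swp P l k * swp P k i) (EE P idx \<Phi> l))"
      unfolding EE'_def by (simp add: smult_sum_right mult.commute)
    also have "\<dots> = (\<Sum>l\<in>gens P. smult (\<Sum>k\<in>gens P. swp P l k * swp P k i) (EE P idx \<Phi> l))"
      by (subst sum.swap) (simp add: smult_sum)
    also have "\<dots> = EE P idx \<Phi> i" by (rule inv_sum_poly[OF inv fin i])
    finally show ?thesis .
  qed
  have f3: "(\<Sum>k\<in>gens P. swp P k i * gam P idx k x y) = gam P idx i y x"
  proof -
    have "(\<Sum>k\<in>gens P. swp P k i * gam P idx k x y) =
       coeff y 2 * (\<Sum>k\<in>gens P. swp P k i * coeff x (4 + idx k)) +
       coeff x 2 * (\<Sum>k\<in>gens P. \<Sum>l\<in>gens P. swp P l k * swp P k i * coeff y (4 + idx l))"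
      unfolding gam_def by (simp add: algebra_simps sum.distrib sum_distrib_left)
    also have "(\<Sum>k\<in>gens P. \<Sum>l\<in>gens P. swp P l k * swp P k i * coeff y (4 + idx l))
        = (\<Sum>l\<in>gens P. (\<Sum>k\<in>gens P. swp P l k * swp P k i) * coeff y (4 + idx l))"
      by (subst sum.swap) (simp add: sum_distrib_right)
    also have "\<dots> = coeff y (4 + idx i)" by (rule inv_sum[OF inv fin i])
    finally show ?thesis unfolding gam_def by (simp add: algebra_simps)
  qed
  have "(\<Sum>k\<in>gens P. smult (swp P k i) (mm P idx \<Phi> k x y)) =
     smult (coeff x 0 * coeff y 1) (\<Sum>k\<in>gens P. smult (swp P k i) (EE P idx \<Phi> k)) +
     smult (coeff x 1 * coeff y 0) (\<Sum>k\<in>gens P. smult (swp P k i) (EE' P idx \<Phi> k)) +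
     monom (\<Sum>k\<in>gens P. swp P k i * gam P idx k x y) 3"
    unfolding mm_def by (simp add: smult_add_right smult_sum_right sum.distrib smult_monom monom_sum mult.commute mult.left_commute)
  also have "\<dots> = mm P idx \<Phi> i y x"
    unfolding f2 f3 mm_def EE'_def[of P idx \<Phi> i, symmetric] by (simp add: mult.commute add_ac)
  finally show ?thesis by simp
qed


lemma act3_A0: "k1 \<in> gens P \<Longrightarrow> k2 \<in> gens P \<Longrightarrow> act3 P id r 0 k1 k2 = r 0 k1 k2"
  by (simp add: act3_def sum3)
lemma act3_A1: "k1 \<in> gens P \<Longrightarrow> k2 \<in> gens P \<Longrightarrow> act3 P (transpose (0::nat) 1 \<circ> transpose 0 2) r 0 k1 k2 = r 1 k1 k2"
  by (simp add: act3_def sum3 transpose_def)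
lemma act3_A2: "k1 \<in> gens P \<Longrightarrow> k2 \<in> gens P \<Longrightarrow> act3 P (transpose (0::nat) 2 \<circ> transpose 0 1) r 0 k1 k2 = r 2 k1 k2"
  by (simp add: act3_def sum3 transpose_def)
lemma act3_B0: "k1 \<in> gens P \<Longrightarrow> k2 \<in> gens P \<Longrightarrow> act3 P (transpose (0::nat) 1) r 0 k1 k2 = (\<Sum>i\<in>gens P. swp P k1 i * r 0 i k2)"
  by (simp add: act3_def sum3 transpose_def)
lemma act3_B1: "k1 \<in> gens P \<Longrightarrow> k2 \<in> gens P \<Longrightarrow> act3 P (transpose (0::nat) 2) r 0 k1 k2 = (\<Sum>i\<in>gens P. swp P k1 i * r 1 i k2)"
  by (simp add: act3_def sum3 transpose_def)
lemma act3_B2: "k1 \<in> gens P \<Longrightarrow> k2 \<in> gens P \<Longrightarrow> act3 P (transpose (1::nat) 2) r 0 k1 k2 = (\<Sum>i\<in>gens P. swp P k1 i * r 2 i k2)"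
  by (simp add: act3_def sum3 transpose_def)

lemma perm_A1: "(transpose (0::nat) 1 \<circ> transpose 0 2) permutes {0,1,2}"
  by (intro permutes_compose permutes_swap_id) auto
lemma perm_A2: "(transpose (0::nat) 2 \<circ> transpose 0 1) permutes {0,1,2}"
  by (intro permutes_compose permutes_swap_id) auto
lemma perm_B0: "transpose (0::nat) 1 permutes {0,1,2}"
  by (intro permutes_swap_id) auto
lemma perm_B1: "transpose (0::nat) 2 permutes {0,1,2}"
  by (intro permutes_swap_id) auto
lemma perm_B2: "transpose (1::nat) 2 permutes {0,1,2}"
  by (intro permutes_swap_id) auto

lemma bq_act3: "is_bq_operad P \<Longrightarrow> \<sigma> permutes {0, 1, 2} \<Longrightarrow> r \<in> rels P \<Longrightarrow> act3 P \<sigma> r \<in> rels P"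
  unfolding is_bq_operad_def by blast

lemma rel_A:
  assumes bq: "is_bq_operad P" and h\<Phi>: "\<forall>r\<in>rels P. (\<Sum>i1\<in>gens P. \<Sum>i2\<in>gens P. r 0 i1 i2 * \<Phi> i1 i2) = 0"
    and r: "r \<in> rels P" and s: "s < 3"
  shows "(\<Sum>i1\<in>gens P. \<Sum>i2\<in>gens P. r s i1 i2 * \<Phi> i1 i2) = 0"
proof -
  have c: "(\<Sum>i1\<in>gens P. \<Sum>i2\<in>gens P. r s i1 i2 * \<Phi> i1 i2) = 0"
    if \<sigma>: "\<sigma> permutes {0,1,2}" and e: "\<And>k1 k2. k1 \<in> gens P \<Longrightarrow> k2 \<in> gens P \<Longrightarrow> act3 P \<sigma> r 0 k1 k2 = r s k1 k2" for \<sigma> s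
  proof -
    have "(\<Sum>i1\<in>gens P. \<Sum>i2\<in>gens P. act3 P \<sigma> r 0 i1 i2 * \<Phi> i1 i2) = 0"
      using h\<Phi> bq_act3[OF bq \<sigma> r] by blast
    then show ?thesis by (simp add: e)
  qed
  from s have "s = 0 \<or> s = 1 \<or> s = 2" by auto
  then show ?thesis
    using c[OF permutes_id act3_A0] c[OF perm_A1 act3_A1] c[OF perm_A2 act3_A2] by auto
qed

lemma rel_B:
  assumes bq: "is_bq_operad P" and h\<Phi>: "\<forall>r\<in>rels P. (\<Sum>i1\<in>gens P. \<Sum>i2\<in>gens P. r 0 i1 i2 * \<Phi> i1 i2) = 0"
    and r: "r \<in> rels P" and s: "s < 3"
  shows "(\<Sum>i1\<in>gens P. \<Sum>i2\<in>gens P. r s i1 i2 * (\<Sum>k\<in>gens P. swp P k i1 * \<Phi> k i2)) = 0"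
proof -
  have c: "(\<Sum>i1\<in>gens P. \<Sum>i2\<in>gens P. r s i1 i2 * (\<Sum>k\<in>gens P. swp P k i1 * \<Phi> k i2)) = 0"
    if \<sigma>: "\<sigma> permutes {0,1,2}" and e: "\<And>k1 k2. k1 \<in> gens P \<Longrightarrow> k2 \<in> gens P \<Longrightarrow>
       act3 P \<sigma> r 0 k1 k2 = (\<Sum>i\<in>gens P. swp P k1 i * r s i k2)" for \<sigma> s
  proof -
    have "(\<Sum>i1\<in>gens P. \<Sum>i2\<in>gens P. act3 P \<sigma> r 0 i1 i2 * \<Phi> i1 i2) = 0"
      using h\<Phi> bq_act3[OF bq \<sigma> r] by blast
    then have "(\<Sum>k1\<in>gens P. \<Sum>k2\<in>gens P. \<Sum>i\<in>gens P. swp P k1 i * r s i k2 * \<Phi> k1 k2) = 0"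
      by (simp add: e sum_distrib_right)
    also have "(\<Sum>k1\<in>gens P. \<Sum>k2\<in>gens P. \<Sum>i\<in>gens P. swp P k1 i * r s i k2 * \<Phi> k1 k2)
       = (\<Sum>k1\<in>gens P. \<Sum>i\<in>gens P. \<Sum>k2\<in>gens P. swp P k1 i * r s i k2 * \<Phi> k1 k2)"
      by (rule sum.cong[OF refl], rule sum.swap)
    also have "\<dots> = (\<Sum>i\<in>gens P. \<Sum>k1\<in>gens P. \<Sum>k2\<in>gens P. swp P k1 i * r s i k2 * \<Phi> k1 k2)"
      by (rule sum.swap)
    also have "\<dots> = (\<Sum>i\<in>gens P. \<Sum>k2\<in>gens P. \<Sum>k1\<in>gens P. swp P k1 i * r s i k2 * \<Phi> k1 k2)"
      by (rule sum.cong[OF refl], rule sum.swap)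
    also have "\<dots> = (\<Sum>i1\<in>gens P. \<Sum>i2\<in>gens P. r s i1 i2 * (\<Sum>k\<in>gens P. swp P k i1 * \<Phi> k i2))"
      by (intro sum.cong refl) (simp add: sum_distrib_left mult_ac)
    finally show ?thesis .
  qed
  from s have "s = 0 \<or> s = 1 \<or> s = 2" by auto
  then show ?thesis
    using c[OF perm_B0 act3_B0] c[OF perm_B1 act3_B1] c[OF perm_B2 act3_B2] by auto
qed


lemma cex_alg:
  fixes P :: "('k::field, 'i) bq_operad"
  assumes bq: "is_bq_operad P"
    and h\<Phi>: "\<forall>r\<in>rels P. (\<Sum>i1\<in>gens P. \<Sum>i2\<in>gens P. r 0 i1 i2 * \<Phi> i1 i2) = 0"
    and idx: "inj_on idx (gens P)"
  shows "is_algebra P smult (mm P idx \<Phi>)"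
proof -
  have fin: "finite (gens P)" using bq by (simp add: is_bq_operad_def)
  have inv: "\<forall>i\<in>gens P. \<forall>j\<in>gens P. (\<Sum>k\<in>gens P. swp P i k * swp P k j) = (if i = j then 1 else 0)"
    using bq by (simp add: is_bq_operad_def)
  have vs: "vector_space (smult :: 'k \<Rightarrow> 'k poly \<Rightarrow> 'k poly)"
    by unfold_locales (simp_all add: smult_add_right smult_add_left)
  have rel: "(\<Sum>s<3. \<Sum>i1\<in>gens P. \<Sum>i2\<in>gens P.
           smult (r s i1 i2) (mm P idx \<Phi> i2 (mm P idx \<Phi> i1 (x s) (x ((s + 1) mod 3))) (x ((s + 2) mod 3)))) = 0"
    if r: "r \<in> rels P" for r x
  proof (rule sum.neutral, rule ballI)
    fix s assume "s \<in> {..<(3::nat)}"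
    then have s: "s < 3" by simp
    have h\<Phi>': "\<forall>r\<in>rels P. (\<Sum>i1\<in>gens P. \<Sum>i2\<in>gens P. r 0 i1 i2 * \<Phi> i1 i2) = 0"
      using h\<Phi> by blast
    define a where "a = coeff (x s) 0"
    define b where "b = coeff (x ((s + 1) mod 3)) 1"
    define c where "c = coeff (x s) 1"
    define d where "d = coeff (x ((s + 1) mod 3)) 0"
    define e where "e = coeff (x ((s + 2) mod 3)) 2"
    have "(\<Sum>i1\<in>gens P. \<Sum>i2\<in>gens P.
           smult (r s i1 i2) (mm P idx \<Phi> i2 (mm P idx \<Phi> i1 (x s) (x ((s + 1) mod 3))) (x ((s + 2) mod 3))))
       = (\<Sum>i1\<in>gens P. \<Sum>i2\<in>gens P. monom (r s i1 i2 * ((a * b * \<Phi> i1 i2 + c * d * (\<Sum>k\<in>gens P. swp P k i1 * \<Phi> k i2)) * e)) 3)"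
      unfolding a_def b_def c_def d_def e_def
      by (intro sum.cong refl) (simp add: mm_tree[OF fin idx] smult_monom)
    also have "\<dots> = monom (\<Sum>i1\<in>gens P. \<Sum>i2\<in>gens P. r s i1 i2 * ((a * b * \<Phi> i1 i2 + c * d * (\<Sum>k\<in>gens P. swp P k i1 * \<Phi> k i2)) * e)) 3"
      by (simp add: monom_sum)
    also have "(\<Sum>i1\<in>gens P. \<Sum>i2\<in>gens P. r s i1 i2 * ((a * b * \<Phi> i1 i2 + c * d * (\<Sum>k\<in>gens P. swp P k i1 * \<Phi> k i2)) * e))
       = a * b * e * (\<Sum>i1\<in>gens P. \<Sum>i2\<in>gens P. r s i1 i2 * \<Phi> i1 i2)
         + c * d * e * (\<Sum>i1\<in>gens P. \<Sum>i2\<in>gens P. r s i1 i2 * (\<Sum>k\<in>gens P. swp P k i1 * \<Phi> k i2))"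
      by (simp add: algebra_simps sum.distrib sum_distrib_left)
    also have "\<dots> = 0" using rel_A[OF bq h\<Phi>' r s] rel_B[OF bq h\<Phi>' r s] by simp
    finally show "(\<Sum>i1\<in>gens P. \<Sum>i2\<in>gens P.
           smult (r s i1 i2) (mm P idx \<Phi> i2 (mm P idx \<Phi> i1 (x s) (x ((s + 1) mod 3))) (x ((s + 2) mod 3)))) = 0"
      by simp
  qed
  show ?thesis
    unfolding is_algebra_def
  proof (intro conjI ballI allI)
    show "vector_space (smult :: 'k \<Rightarrow> 'k poly \<Rightarrow> 'k poly)" by (rule vs)
  next
    fix r x assume "r \<in> rels P"
    then show "(\<Sum>s<3. \<Sum>i1\<in>gens P. \<Sum>i2\<in>gens P.
           smult (r s i1 i2) (mm P idx \<Phi> i2 (mm P idx \<Phi> i1 (x s) (x ((s + 1) mod 3))) (x ((s + 2) mod 3)))) = 0"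
      by (rule rel)
  next
    fix i x y assume "i \<in> gens P"
    then show "mm P idx \<Phi> i y x = (\<Sum>k\<in>gens P. smult (swp P k i) (mm P idx \<Phi> k x y))"
      by (rule mm_sym[OF inv fin])
  qed (simp_all add: mm_add1 mm_add2 mm_sc1 mm_sc2)
qed


lemma not_dong:
  fixes P :: "('k::field, 'i) bq_operad" and idx :: "'i \<Rightarrow> nat"
  assumes bq: "is_bq_operad P"
    and h\<Phi>: "\<forall>r\<in>rels P. (\<Sum>i1\<in>gens P. \<Sum>i2\<in>gens P. r 0 i1 i2 * \<Phi> i1 i2) = 0"
    and idx: "inj_on idx (gens P)"
    and p1: "p1 \<in> gens P" and p2: "p2 \<in> gens P" and nz: "\<Phi> p1 p2 \<noteq> 0"
  shows "\<not> dong P TYPE('k poly)"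
proof
  assume "dong P TYPE('k poly)"
  then have da: "dong_alg P smult (mm P idx \<Phi>)"
    using cex_alg[OF bq h\<Phi> idx] unfolding dong_def by blast
  have fin: "finite (gens P)" using bq by (simp add: is_bq_operad_def)
  have vs: "vector_space (smult :: 'k \<Rightarrow> 'k poly \<Rightarrow> 'k poly)"
    by unfold_locales (simp_all add: smult_add_right smult_add_left)
  let ?m = "mm P idx \<Phi>"
  define a :: "int \<Rightarrow> 'k poly" where "a = (\<lambda>_. 1)"
  define b :: "int \<Rightarrow> 'k poly" where "b = (\<lambda>_. monom 1 1)"
  define d :: "int \<Rightarrow> 'k poly" where "d = (\<lambda>t. if t = 0 then monom 1 2 else 0)"
  have m_bd: "?m \<mu> (monom 1 1) (d t) = 0" for \<mu> t
    by (simp add: mm_def gam_def d_def)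
  have m_bd': "?m \<mu> (monom 1 (Suc 0)) (d t) = 0" for \<mu> t
    by (simp add: mm_def gam_def d_def)
  have m_ad: "?m \<mu> 1 (d t) = 0" for \<mu> t
    by (simp add: mm_def gam_def d_def)
  have lab: "local_dist P smult ?m a b"
    unfolding local_dist_def a_def b_def
    by (intro allI exI[of _ "Suc 0"]) simp
  have lbd: "local_dist P smult ?m b d"
    unfolding local_dist_def
    by (intro allI exI[of _ 0]) (simp add: opr_def b_def m_bd')
  have lad: "local_dist P smult ?m a d"
    unfolding local_dist_def
    by (intro allI exI[of _ 0]) (simp add: opr_def a_def m_ad)
  define c0 :: "'i \<Rightarrow> 'k" where "c0 = (\<lambda>\<nu>. if \<nu> = p1 then 1 else 0)"
  define c1 :: "'i \<Rightarrow> 'k" where "c1 = (\<lambda>\<nu>. if \<nu> = p2 then 1 else 0)"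
  have "local_dist P smult ?m (nprod P smult ?m c0 0 a b) d"
    using da lab lbd lad unfolding dong_alg_def by blast
  then obtain N where N: "\<And>s t. (\<Sum>k\<le>N. smult ((-1) ^ k * of_nat (N choose k))
        (opr P smult ?m c1 (nprod P smult ?m c0 0 a b (s + int N - int k)) (d (t + int k)))) = 0"
    unfolding local_dist_def by blast
  have np: "nprod P smult ?m c0 0 a b w = EE P idx \<Phi> p1" for w
    unfolding nprod_def c0_def a_def b_def
    by (simp add: opr_ind[OF fin p1 vs] mm_def gam_def)
  have "(\<Sum>k\<le>N. smult ((-1) ^ k * of_nat (N choose k))
        (opr P smult ?m c1 (nprod P smult ?m c0 0 a b (0 + int N - int k)) (d (0 + int k))))
      = (\<Sum>k\<le>N. if k = 0 then ?m p2 (EE P idx \<Phi> p1) (monom 1 2) else 0)"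
    unfolding np c1_def opr_ind[OF fin p2 vs]
    by (intro sum.cong refl) (simp add: d_def mm_def gam_def)
  also have "\<dots> = ?m p2 (EE P idx \<Phi> p1) (monom 1 2)" by simp
  also have "\<dots> = monom (\<Phi> p1 p2) 3"
    by (simp add: mm_def gam_def coeff_EE_small coeff_EE_idx[OF fin idx p2])
  finally show False using N[of 0 0] nz by simp
qed


lemma sum_fun_apply: "(\<Sum>a\<in>A. f a) x = (\<Sum>a\<in>A. f a x)"
  by (induction A rule: infinite_finite_induct) simp_all

lemma exists_Phi:
  fixes P :: "('k::field, 'i) bq_operad"
  assumes bq: "is_bq_operad P" and p1: "p1 \<in> gens P" and p2: "p2 \<in> gens P"
    and no: "\<not> (\<exists>\<rho>\<in>rels P. \<forall>i1\<in>gens P. \<forall>i2\<in>gens P. \<rho> 0 i1 i2 = (if i1 = p1 \<and> i2 = p2 then 1 else 0))"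
  shows "\<exists>\<Phi>. (\<forall>r\<in>rels P. (\<Sum>i1\<in>gens P. \<Sum>i2\<in>gens P. r 0 i1 i2 * \<Phi> i1 i2) = 0) \<and> \<Phi> p1 p2 = 1"
proof -
  define sV :: "'k \<Rightarrow> ('i \<Rightarrow> 'i \<Rightarrow> 'k) \<Rightarrow> ('i \<Rightarrow> 'i \<Rightarrow> 'k)" where "sV = (\<lambda>c f x y. c * f x y)"
  have vs1: "vector_space sV" by unfold_locales (simp_all add: sV_def fun_eq_iff algebra_simps)
  have vs2: "vector_space ((*) :: 'k \<Rightarrow> 'k \<Rightarrow> 'k)" by unfold_locales (simp_all add: algebra_simps)
  interpret V: vector_space sV by (rule vs1)
  interpret VP: vector_space_pair sV "(*) :: 'k \<Rightarrow> 'k \<Rightarrow> 'k" by unfold_locales (simp_all add: algebra_simps)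
  have fin: "finite (gens P)" using bq by (simp add: is_bq_operad_def)
  have free: "r s i1 i2 = 0" if "r \<in> rels P" "i1 \<notin> gens P \<or> i2 \<notin> gens P" for r s i1 i2
  proof -
    have "r \<in> free3 (gens P)" using bq that(1) by (auto simp: is_bq_operad_def)
    then show ?thesis using that(2) by (auto simp: free3_def)
  qed
  have zr: "(\<lambda>_ _ _. 0) \<in> rels P" and addr: "\<And>r r'. r \<in> rels P \<Longrightarrow> r' \<in> rels P \<Longrightarrow> (\<lambda>s i1 i2. r s i1 i2 + r' s i1 i2) \<in> rels P"
    and scr: "\<And>r c. r \<in> rels P \<Longrightarrow> (\<lambda>s i1 i2. c * r s i1 i2) \<in> rels P"
    using bq unfolding is_bq_operad_def by blast+
  define W where "W = (\<lambda>r. r 0) ` rels P"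
  define \<delta> where "\<delta> = (\<lambda>x y. if x = p1 \<and> y = p2 then (1::'k) else 0)"
  have \<delta>W: "\<delta> \<notin> W"
  proof
    assume "\<delta> \<in> W"
    then obtain r where r: "r \<in> rels P" "r 0 = \<delta>" unfolding W_def by blast
    then show False using no by (auto simp: \<delta>_def)
  qed
  have sub: "V.subspace W"
    unfolding V.subspace_def
  proof (intro conjI ballI allI)
    show "0 \<in> W" unfolding W_def using zr by (force simp: zero_fun_def)
  next
    fix x y assume "x \<in> W" "y \<in> W"
    then obtain r r' where rr: "r \<in> rels P" "r' \<in> rels P" "x = r 0" "y = r' 0" unfolding W_def by blast
    then show "x + y \<in> W" unfolding W_def
      by (intro image_eqI[OF _ addr[OF rr(1,2)]]) (auto simp: fun_eq_iff)
  next
    fix c x assume "x \<in> W"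
    then obtain r where rr: "r \<in> rels P" "x = r 0" unfolding W_def by blast
    then show "sV c x \<in> W" unfolding W_def sV_def
      by (intro image_eqI[OF _ scr[OF rr(1), of c]]) (auto simp: fun_eq_iff)
  qed
  obtain B where B: "B \<subseteq> W" "V.independent B" "W \<subseteq> V.span B"
    by (rule V.maximal_independent_subset)
  have spanB: "V.span B \<subseteq> W" by (rule V.span_minimal[OF B(1) sub])
  have "V.independent (insert \<delta> B)"
    using \<delta>W spanB B(2) by (intro V.independent_insertI) auto
  then obtain g where g: "Vector_Spaces.linear sV (*) g" "\<forall>x\<in>insert \<delta> B. g x = (if x = \<delta> then 1 else 0)"
    using VP.linear_independent_extend[of "insert \<delta> B" "\<lambda>x. if x = \<delta> then 1 else 0"] by blast
  have mh: "module_hom sV (*) g" using g(1) by (simp add: module_hom_iff_linear)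
  have g0: "g w = 0" if "w \<in> W" for w
  proof (rule module_hom.eq_0_on_span[OF mh])
    fix x assume "x \<in> B"
    then show "g x = 0" using g(2) B(1) \<delta>W by auto
  next
    show "w \<in> V.span B" using B(3) that by blast
  qed
  define \<Phi> where "\<Phi> i1 i2 = g (\<lambda>x y. if x = i1 \<and> y = i2 then 1 else 0)" for i1 i2
  have "\<Phi> p1 p2 = 1" using g(2) by (simp add: \<Phi>_def \<delta>_def[symmetric])
  moreover have "(\<Sum>i1\<in>gens P. \<Sum>i2\<in>gens P. r 0 i1 i2 * \<Phi> i1 i2) = 0" if r: "r \<in> rels P" for r
  proof -
    have w: "r 0 = (\<Sum>i1\<in>gens P. \<Sum>i2\<in>gens P. sV (r 0 i1 i2) (\<lambda>x y. if x = i1 \<and> y = i2 then 1 else 0))"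
    proof (intro ext)
      fix x y
      have "(\<Sum>i1\<in>gens P. \<Sum>i2\<in>gens P. sV (r 0 i1 i2) (\<lambda>x y. if x = i1 \<and> y = i2 then 1 else 0)) x y
          = (\<Sum>i1\<in>gens P. if i1 = x then (\<Sum>i2\<in>gens P. if i2 = y then r 0 i1 i2 else 0) else 0)"
        unfolding sum_fun_apply sV_def by (intro sum.cong refl) (auto intro!: sum.cong)
      also have "\<dots> = (if x \<in> gens P \<and> y \<in> gens P then r 0 x y else 0)" using fin by simp
      also have "\<dots> = r 0 x y" using free[OF r] by auto
      finally show "r 0 x y = (\<Sum>i1\<in>gens P. \<Sum>i2\<in>gens P. sV (r 0 i1 i2) (\<lambda>x y. if x = i1 \<and> y = i2 then 1 else 0)) x y"
        by simp
    qed
    have "g (r 0) = (\<Sum>i1\<in>gens P. \<Sum>i2\<in>gens P. r 0 i1 i2 * \<Phi> i1 i2)"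
      by (subst w) (simp add: module_hom.sum[OF mh] module_hom.scale[OF mh] \<Phi>_def)
    moreover have "g (r 0) = 0" using g0 r unfolding W_def by blast
    ultimately show ?thesis by simp
  qed
  ultimately show ?thesis by blast
qed


lemma nec:
  fixes P :: "('k::field, 'i) bq_operad"
  assumes bq: "is_bq_operad P" and dg: "dong P TYPE('k poly)"
    and p1: "p1 \<in> gens P" and p2: "p2 \<in> gens P"
  shows "\<exists>\<rho>\<in>rels P. \<forall>i1\<in>gens P. \<forall>i2\<in>gens P. \<rho> 0 i1 i2 = (if i1 = p1 \<and> i2 = p2 then 1 else 0)"
proof (rule ccontr)
  assume no: "\<not> (\<exists>\<rho>\<in>rels P. \<forall>i1\<in>gens P. \<forall>i2\<in>gens P. \<rho> 0 i1 i2 = (if i1 = p1 \<and> i2 = p2 then 1 else 0))"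
  obtain \<Phi> where \<Phi>: "\<forall>r\<in>rels P. (\<Sum>i1\<in>gens P. \<Sum>i2\<in>gens P. r 0 i1 i2 * \<Phi> i1 i2) = 0" "\<Phi> p1 p2 = 1"
    using exists_Phi[OF bq p1 p2 no] by blast
  have fin: "finite (gens P)" using bq by (simp add: is_bq_operad_def)
  obtain idx :: "'i \<Rightarrow> nat" and n where "idx ` gens P = {i. i < n}" "inj_on idx (gens P)"
    using finite_imp_inj_to_nat_seg[OF fin] by blast
  then show False using not_dong[OF bq \<Phi>(1) _ p1 p2] \<Phi>(2) dg by simp
qed

theorem mainTheorem4:
  fixes P :: "('k::field, 'i) bq_operad" and Q :: "('k, 'j) bq_operad"
  assumes "is_bq_operad P" and "is_bq_operad Q"
    and "dong P TYPE('k poly)" and "dong Q TYPE('k poly)"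
  shows "dong (black P Q) TYPE('a::ab_group_add)"
proof -
  have finP: "finite (gens P)" using assms(1) by (simp add: is_bq_operad_def)
  have finQ: "finite (gens Q)" using assms(2) by (simp add: is_bq_operad_def)
  have fin: "finite (gens (black P Q))" using finP finQ by (simp add: black_def)
  have crit: "\<exists>\<rho>\<in>rels (black P Q). \<forall>i1\<in>gens (black P Q). \<forall>i2\<in>gens (black P Q).
          \<rho> 0 i1 i2 = (if i1 = u \<and> i2 = v then 1 else 0)"
    if u: "u \<in> gens (black P Q)" and v: "v \<in> gens (black P Q)" for u v
  proof -
    have u': "fst u \<in> gens P" "snd u \<in> gens Q" and v': "fst v \<in> gens P" "snd v \<in> gens Q"
      using u v by (auto simp: black_def)
    obtain r where r: "r \<in> rels P" "\<forall>i1\<in>gens P. \<forall>i2\<in>gens P. r 0 i1 i2 = (if i1 = fst u \<and> i2 = fst v then 1 else 0)"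
      using nec[OF assms(1) assms(3) u'(1) v'(1)] by blast
    obtain q where q: "q \<in> rels Q" "\<forall>i1\<in>gens Q. \<forall>i2\<in>gens Q. q 0 i1 i2 = (if i1 = snd u \<and> i2 = snd v then 1 else 0)"
      using nec[OF assms(2) assms(4) u'(2) v'(2)] by blast
    define \<rho> where "\<rho> = (\<lambda>s (u::'i \<times> 'j) (v::'i \<times> 'j). r s (fst u) (fst v) * q s (snd u) (snd v))"
    have "\<rho> \<in> rels (black P Q)"
      unfolding black_def lin_span_def
    proof (simp, intro exI conjI)
      show "finite {\<rho>}" by simp
      show "{\<rho>} \<subseteq> {\<lambda>s u v. r s (fst u) (fst v) * q s (snd u) (snd v) |r q. r \<in> rels P \<and> q \<in> rels Q}"
        using r(1) q(1) unfolding \<rho>_def by blast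
      show "\<rho> = (\<lambda>s u v. \<Sum>g\<in>{\<rho>}. 1 * g s u v)" by simp
    qed
    moreover have "\<forall>i1\<in>gens (black P Q). \<forall>i2\<in>gens (black P Q). \<rho> 0 i1 i2 = (if i1 = u \<and> i2 = v then 1 else 0)"
      using r(2) q(2) by (auto simp: black_def \<rho>_def prod_eq_iff)
    ultimately show ?thesis by blast
  qed
  show ?thesis
    unfolding dong_def using suff[OF fin _ crit] by blast
qed

end
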